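(* Fix non-negative integers $a\leq b$ and a positive integer $r$, and let $\mu=\frac{a+b}{2r}$. For integers $-1\leq\ell\leq\lfloor(b-a)/r\rfloor$ define $\mu''_\ell=\mu-\frac{\ell+1}{2}$ and $\theta_\ell=\beta_{r,\mu''_\ell}+(\ell+1)(r+a)$. Let $0\leq\ell\leq\lfloor(b-a)/r\rfloor$ be an integer. Then $\theta_\ell<\theta_{\ell-1}$, unless either $\ell=\lfloor(b-a)/r\rfloor$, or $\ell=\lfloor(b-a)/r\rfloor-1$ and $\lfloor\mu''_{\ell-1}\rfloor=\lfloor\mu''_\ell\rfloor$.
   Context: For an integer $r\geq1$ and rational $\mu\geq-1$: $\alpha_\mu=\lfloor\mu\rfloor+1$ and $\beta_{r,\mu}=r\alpha_\mu(2\mu-\alpha_\mu+2)$. (All $\mu''_\ell$ in the stated range satisfy $\mu''_\ell\geq-1$.) *)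

theory Defs
  imports Complex_Main
begin

definition alpha :: "rat \<Rightarrow> int" where
  "alpha \<mu> = \<lfloor>\<mu>\<rfloor> + 1"

definition beta :: "nat \<Rightarrow> rat \<Rightarrow> rat" where
  "beta r \<mu> = of_nat r * of_int (alpha \<mu>) * (2 * \<mu> - of_int (alpha \<mu>) + 2)"

definition muPP :: "nat \<Rightarrow> nat \<Rightarrow> nat \<Rightarrow> int \<Rightarrow> rat" where
  "muPP a b r l = (of_nat a + of_nat b) / (2 * of_nat r) - (of_int l + 1) / 2"

definition theta :: "nat \<Rightarrow> nat \<Rightarrow> nat \<Rightarrow> int \<Rightarrow> rat" where
  "theta a b r l = beta r (muPP a b r l) + (of_int l + 1) * (of_nat r + of_nat a)"

end

theory Submission
  imports Defs
begin

theorem proposition3p8: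
  fixes a b r :: nat and l :: int
  assumes "a \<le> b" and "r \<ge> 1"
    and "0 \<le> l" and "l \<le> (int b - int a) div int r"
    and "\<not> (l = (int b - int a) div int r \<or>
             (l = (int b - int a) div int r - 1 \<and>
              \<lfloor>muPP a b r (l - 1)\<rfloor> = \<lfloor>muPP a b r l\<rfloor>))"
  shows "theta a b r l < theta a b r (l - 1)"
proof -
  define L where "L = (int b - int a) div int r"
  define m where "m = muPP a b r l"
  define k where "k = \<lfloor>m\<rfloor>"
  define R where "R = (of_nat r :: rat)"
  have Rpos: "R \<ge> 1" using assms(2) unfolding R_def by simp
  have m1: "muPP a b r (l - 1) = m + 1/2"
    unfolding m_def muPP_def by (simp add: field_simps)
  have rm: "2 * R * m = of_nat a + of_nat b - R * (of_int l + 1)"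
    unfolding m_def muPP_def R_def using assms(2) by (simp add: field_simps)
  have Ldiv: "int r * L \<le> int b - int a" unfolding L_def
    by (metis div_mult_mod_eq le_add_same_cancel1 mod_int_pos_iff mult.commute assms(2) of_nat_0_less_iff less_le_trans zero_less_one)
  have lL: "l \<le> L - 1" using assms(4,5) unfolding L_def by auto
  have "int r * (l + 1) \<le> int r * L" using lL by (intro mult_left_mono) auto
  hence "int r * (l + 1) \<le> int b - int a" using Ldiv by linarith
  hence "(of_int (int r * (l + 1)) :: rat) \<le> of_int (int b - int a)" by (simp only: of_int_le_iff)
  hence "R * (of_int l + 1) \<le> of_nat b - of_nat a" unfolding R_def by simp
  hence A: "R * m \<ge> of_nat a" using rm by (simp add: algebra_simps)
  have thl: "theta a b r l = R * of_int (k + 1) * (2 * m - of_int (k+1) + 2) + (of_int l + 1) * (R + of_nat a)"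
    unfolding theta_def beta_def alpha_def m_def k_def R_def by simp
  have thl1: "theta a b r (l-1) = R * of_int (\<lfloor>m + 1/2\<rfloor> + 1) * (2 * (m + 1/2) - of_int (\<lfloor>m + 1/2\<rfloor>+1) + 2) + (of_int l) * (R + of_nat a)"
    using m1 unfolding theta_def beta_def alpha_def R_def by simp
  have km: "of_int k \<le> m" "m < of_int k + 1" unfolding k_def by linarith+
  have "\<lfloor>m + 1/2\<rfloor> = k \<or> \<lfloor>m + 1/2\<rfloor> = k + 1" using km by linarith
  thus ?thesis
  proof
    assume eq: "\<lfloor>m + 1/2\<rfloor> = k"
    have "m + 1/2 < of_int k + 1" using eq by linarith
    have "\<lfloor>muPP a b r (l - 1)\<rfloor> = \<lfloor>muPP a b r l\<rfloor>" using eq m1 unfolding k_def m_def by simp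
    hence "l \<noteq> L - 1" using assms(5) unfolding L_def by blast
    hence "l + 2 \<le> L" using lL by linarith
    hence "int r * (l + 2) \<le> int r * L" by (intro mult_left_mono) auto
    hence "int r * (l + 2) \<le> int b - int a" using Ldiv by linarith
    hence "(of_int (int r * (l + 2)) :: rat) \<le> of_int (int b - int a)" by (simp only: of_int_le_iff)
    hence "R * (of_int l + 2) \<le> of_nat b - of_nat a" unfolding R_def by simp
    hence B: "R * (2*m - 1) \<ge> 2 * of_nat a" using rm by (simp add: algebra_simps)
    have "2*m - 1 < 2 * of_int k" using \<open>m + 1/2 < of_int k + 1\<close> by linarith
    hence "R * (2*m - 1) < R * (2 * of_int k)" using Rpos by (intro mult_strict_left_mono) auto
    hence C: "R * of_int k > of_nat a" using B by (simp add: algebra_simps)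
    have "theta a b r (l-1) - theta a b r l = R * of_int k - of_nat a"
      unfolding thl thl1 eq by (simp add: algebra_simps)
    thus ?thesis using C by linarith
  next
    assume eq: "\<lfloor>m + 1/2\<rfloor> = k + 1"
    have "of_int k + 1 \<le> m + 1/2" using eq by linarith
    hence "m + 1/2 \<le> 2*m - of_int k" by linarith
    hence "R * (m + 1/2) \<le> R * (2*m - of_int k)" using Rpos by (intro mult_left_mono) auto
    hence C: "R * (2*m - of_int k) > of_nat a" using A Rpos by (simp add: algebra_simps)
    have "theta a b r (l-1) - theta a b r l = R * (2*m - of_int k) - of_nat a"
      unfolding thl thl1 eq by (simp add: algebra_simps)
    thus ?thesis using C by linarith
  qed
qed

end
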